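(* Assume values are i.i.d. with CDF $F$ on $[0,\bar v]$ and continuous density $f > 0$, and $2 \le k < n$. Let $z$ be the interim payment function of the efficient allocation rule, $\bar R = n\,\mathbb E[z(v)]$, $G(u) = \binom{n-1}{k-1}(1-F(u))^{k-2}F(u)^{n-k} f(u)$, $$ N(v) = \int_0^v \big[z'(u) - \bar R\, G(u)\big](1-F(u))\,du, \qquad D(v) = \binom{n-1}{k-1} F(v)^{n-k}(1-F(v))^k, $$ and $\psi(v) = N(v)/D(v)$ for $v \in (0,\bar v)$. Then $\lim_{v \downarrow 0}\psi(v) = 0$.
   Context: Setting: $n$ unit-demand bidders, $k$ identical items. The efficient allocation rule gives one item to each of the $k$ bidders with the highest values (ties broken by any fixed rule). Its interim allocation is $x(v) = \mathbb E[A_i(\bm v)\mid v_i = v]$ and interim payment $z(v) = v x(v) - \int_0^v x(u)\,du$. *)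

theory Defs
  imports "HOL-Probability.Probability"
begin

definition value_dist :: "real \<Rightarrow> (real \<Rightarrow> real) \<Rightarrow> real measure" where
  "value_dist vbar f = density lborel (\<lambda>u. ennreal (indicator {0..vbar} u * f u))"

definition eff_alloc :: "nat \<Rightarrow> nat \<Rightarrow> (nat \<Rightarrow> real) \<Rightarrow> nat \<Rightarrow> bool" where
  "eff_alloc n k v i \<longleftrightarrow>
     card {j \<in> {0..<n}. v j > v i \<or> (v j = v i \<and> j < i)} < k"

text \<open>Interim allocation of bidder i: E[A_i(v) | v_i = v], the other values being i.i.d.\<close>
definition interim_alloc ::
  "nat \<Rightarrow> nat \<Rightarrow> real \<Rightarrow> (real \<Rightarrow> real) \<Rightarrow> nat \<Rightarrow> real \<Rightarrow> real" where
  "interim_alloc n k vbar f i v =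
     (LINT w | PiM ({0..<n} - {i}) (\<lambda>_. value_dist vbar f).
        (if eff_alloc n k (w(i := v)) i then 1 else 0))"

definition interim_pay ::
  "nat \<Rightarrow> nat \<Rightarrow> real \<Rightarrow> (real \<Rightarrow> real) \<Rightarrow> nat \<Rightarrow> real \<Rightarrow> real" where
  "interim_pay n k vbar f i v =
     v * interim_alloc n k vbar f i v - integral {0..v} (interim_alloc n k vbar f i)"

end

theory Submission
  imports Defs
begin


context
  fixes vbar :: real and F f :: "real \<Rightarrow> real"
  assumes vpos: "vbar > 0"
    and fcont: "continuous_on {0..vbar} f"
    and fpos: "\<forall>u\<in>{0..vbar}. f u > 0"
    and Fdef: "\<forall>u\<in>{0..vbar}. F u = integral {0..u} f"
    and F1: "F vbar = 1"
begin

lemma g_meas: "(\<lambda>u. ennreal (indicator {0..vbar} u * f u)) \<in> borel_measurable lborel"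
proof -
  have "(\<lambda>u. indicator {0..vbar} u *\<^sub>R f u) \<in> borel_measurable borel"
    by (rule borel_measurable_continuous_on_indicator) (auto simp: fcont)
  then show ?thesis by simp
qed

lemma nn_Icc: assumes "0 \<le> a" "a \<le> vbar"
  shows "(\<integral>\<^sup>+x. ennreal (f x) * indicator {0..a} x \<partial>lborel) = ennreal (F a)"
proof -
  have c: "continuous_on {0..a} f" using fcont assms continuous_on_subset by fastforce
  have "(f has_integral integral {0..a} f) {0..a}"
    using integrable_continuous_real[OF c] by (simp add: integrable_integral)
  then have "(f has_integral F a) {0..a}" using Fdef assms by simp
  moreover have "\<And>x. x \<in> {0..a} \<Longrightarrow> 0 \<le> f x"
  proof -
    fix x assume "x \<in> {0..a}"
    then have "x \<in> {0..vbar}" using assms by auto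
    then show "0 \<le> f x" using fpos by (simp add: less_imp_le)
  qed
  ultimately show ?thesis
    using nn_integral_has_integral_lebesgue' by blast
qed

lemma emeasure_M_atMost: assumes "0 \<le> a" "a \<le> vbar"
  shows "emeasure (value_dist vbar f) {..a} = ennreal (F a)"
proof -
  have "emeasure (value_dist vbar f) {..a} =
     (\<integral>\<^sup>+x. ennreal (indicator {0..vbar} x * f x) * indicator {..a} x \<partial>lborel)"
    unfolding value_dist_def using g_meas by (simp add: emeasure_density)
  also have "\<dots> = (\<integral>\<^sup>+x. ennreal (f x) * indicator {0..a} x \<partial>lborel)"
    using assms by (intro nn_integral_cong) (auto simp: indicator_def)
  finally show ?thesis using nn_Icc assms by simp
qed

lemma emeasure_M_UNIV: "emeasure (value_dist vbar f) UNIV = 1"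
proof -
  have "emeasure (value_dist vbar f) UNIV =
     (\<integral>\<^sup>+x. ennreal (indicator {0..vbar} x * f x) * indicator UNIV x \<partial>lborel)"
    unfolding value_dist_def using g_meas by (simp add: emeasure_density)
  also have "\<dots> = (\<integral>\<^sup>+x. ennreal (f x) * indicator {0..vbar} x \<partial>lborel)"
    by (intro nn_integral_cong) (auto simp: indicator_def)
  finally show ?thesis using nn_Icc[of vbar] vpos F1 by simp
qed

lemma space_M: "space (value_dist vbar f) = UNIV"
  unfolding value_dist_def by simp

lemma sets_M: "sets (value_dist vbar f) = sets borel"
  unfolding value_dist_def by simp

lemma prob_M: "prob_space (value_dist vbar f)"
  by (rule prob_spaceI) (simp add: space_M emeasure_M_UNIV)

lemma emeasure_M_single: "emeasure (value_dist vbar f) {a} = 0"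
proof -
  have "emeasure (value_dist vbar f) {a} =
     (\<integral>\<^sup>+x. ennreal (indicator {0..vbar} x * f x) * indicator {a} x \<partial>lborel)"
    unfolding value_dist_def using g_meas by (simp add: emeasure_density)
  also have "\<dots> = 0"
    by (rule nn_integral_null_set) (auto intro: null_setsI)
  finally show ?thesis .
qed


lemma F_nonneg: assumes "0 \<le> a" "a \<le> vbar" shows "0 \<le> F a"
proof -
  have "F a = integral {0..a} f" using Fdef assms by simp
  also have "\<dots> \<ge> 0"
  proof (rule integral_nonneg)
    show "f integrable_on {0..a}"
      by (rule integrable_continuous_real, rule continuous_on_subset[OF fcont]) (use assms in auto)
  qed (use assms fpos in \<open>auto simp: less_imp_le\<close>)
  finally show ?thesis .
qed

lemma measure_M_atMost: assumes "0 \<le> a" "a \<le> vbar"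
  shows "measure (value_dist vbar f) {..a} = F a"
  using emeasure_M_atMost[OF assms] F_nonneg[OF assms] by (simp add: measure_def)

lemma F_le1: assumes "0 \<le> a" "a \<le> vbar" shows "F a \<le> 1"
  using prob_space.prob_le_1[OF prob_M, of "{..a}"] measure_M_atMost[OF assms] by simp

lemma measure_M_single: "measure (value_dist vbar f) {a} = 0"
  using emeasure_M_single by (simp add: measure_def)

lemma measure_M_A: assumes "0 \<le> a" "a \<le> vbar"
  shows "measure (value_dist vbar f) {u. a < u \<or> (u = a \<and> b)} = 1 - F a"
    and "measure (value_dist vbar f) (- {u. a < u \<or> (u = a \<and> b)}) = F a"
proof -
  interpret M: prob_space "value_dist vbar f" by (rule prob_M)
  have s: "X \<in> sets (value_dist vbar f)" if "X \<in> sets borel" for X using that sets_M by simp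
  have c: "- {u. a < u \<or> (u = a \<and> b)} = (if b then {..<a} else {..a})" by auto
  have "measure (value_dist vbar f) {..<a} = measure (value_dist vbar f) ({..a} - {a})"
    by (rule arg_cong[where f="measure _"]) auto
  also have "\<dots> = F a"
    by (subst M.finite_measure_Diff) (auto intro!: s simp: measure_M_atMost[OF assms] measure_M_single)
  finally have lt: "measure (value_dist vbar f) {..<a} = F a" .
  show 2: "measure (value_dist vbar f) (- {u. a < u \<or> (u = a \<and> b)}) = F a"
    unfolding c using lt measure_M_atMost[OF assms] by simp
  have "measure (value_dist vbar f) {u. a < u \<or> (u = a \<and> b)} =
        1 - measure (value_dist vbar f) (- {u. a < u \<or> (u = a \<and> b)})"
  proof -
    have cA: "{u. a < u \<or> (u = a \<and> b)} = space (value_dist vbar f) - (if b then {..<a} else {..a})"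
      by (auto simp: space_M)
    have "measure (value_dist vbar f) (space (value_dist vbar f) - (if b then {..<a} else {..a}))
       = 1 - measure (value_dist vbar f) (if b then {..<a} else {..a})"
      by (rule M.prob_compl) (auto intro!: s)
    then show ?thesis using cA c by simp
  qed
  then show "measure (value_dist vbar f) {u. a < u \<or> (u = a \<and> b)} = 1 - F a" using 2 by simp
qed


lemma interim_alloc_formula:
  assumes "i < n" "0 \<le> v" "v \<le> vbar"
  shows "interim_alloc n k vbar f i v =
    (\<Sum>S\<in>{S. S \<subseteq> {0..<n} - {i} \<and> card S < k}. \<Prod>j\<in>{0..<n} - {i}. if j \<in> S then 1 - F v else F v)"
proof -
  define M where "M = value_dist vbar f"
  define I where "I = {0..<n} - {i}"
  define PM where "PM = PiM I (\<lambda>_. M)"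
  define A where "A j = {u. v < u \<or> (u = v \<and> j < i)}" for j
  define SS where "SS = {S. S \<subseteq> I \<and> card S < k}"
  define B where "B S = PiE I (\<lambda>j. if j \<in> S then A j else - A j)" for S
  define E where "E = {w. card {j\<in>I. w j \<in> A j} < k}"
  interpret M: prob_space M unfolding M_def by (rule prob_M)
  interpret PS: product_sigma_finite "\<lambda>_::nat. M"
    unfolding product_sigma_finite_def using M.sigma_finite_measure_axioms by simp
  interpret P: prob_space PM unfolding PM_def by (rule prob_space_PiM) (rule M.prob_space_axioms)
  have finI: "finite I" unfolding I_def by simp
  have Aset: "A j \<in> sets M" for j
  proof -
    have "A j = (if j < i then {v..} else {v<..})" unfolding A_def by auto
    then show ?thesis unfolding M_def sets_M by simp
  qed
  have F01: "F v \<le> 1" using M.prob_le_1[of "{..v}"] measure_M_atMost[OF assms(2,3)] by (simp add: M_def)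
  have Aset': "- A j \<in> sets M" for j
  proof -
    have "- A j = space M - A j" unfolding M_def space_M by auto
    then show ?thesis using Aset[of j] by auto
  qed
  have eff: "eff_alloc n k (w(i := v)) i \<longleftrightarrow> w \<in> E" for w
  proof -
    have "{j \<in> {0..<n}. (w(i := v)) j > (w(i := v)) i \<or> ((w(i := v)) j = (w(i := v)) i \<and> j < i)}
          = {j\<in>I. w j \<in> A j}"
      unfolding I_def A_def by auto
    then show ?thesis unfolding eff_alloc_def E_def by simp
  qed
  have "interim_alloc n k vbar f i v = integral\<^sup>L PM (indicator E)"
    unfolding interim_alloc_def PM_def M_def I_def[symmetric]
    by (intro Bochner_Integration.integral_cong) (auto simp: eff indicator_def)
  also have "\<dots> = measure PM (E \<inter> space PM)" by simp
  also have "E \<inter> space PM = (\<Union>S\<in>SS. B S)"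
  proof (intro equalityI subsetI)
    fix w assume w: "w \<in> E \<inter> space PM"
    then have ws: "w \<in> PiE I (\<lambda>_. UNIV)" unfolding PM_def by (simp add: space_PiM M_def space_M)
    have "{j\<in>I. w j \<in> A j} \<in> SS" using w unfolding SS_def E_def by auto
    moreover have "w \<in> B {j\<in>I. w j \<in> A j}" using ws unfolding B_def by (auto simp: PiE_iff)
    ultimately show "w \<in> (\<Union>S\<in>SS. B S)" by blast
  next
    fix w assume "w \<in> (\<Union>S\<in>SS. B S)"
    then obtain S where S: "S \<in> SS" "w \<in> B S" by blast
    have "{j\<in>I. w j \<in> A j} = S" using S unfolding B_def SS_def
      by (auto simp: PiE_iff) (metis ComplD, metis subsetD)
    then have "w \<in> E" using S unfolding E_def SS_def by simp
    moreover have "w \<in> space PM" using S(2) unfolding B_def PM_def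
      by (auto simp: space_PiM M_def space_M PiE_iff)
    ultimately show "w \<in> E \<inter> space PM" by simp
  qed
  also have "measure PM (\<Union>S\<in>SS. B S) = (\<Sum>S\<in>SS. measure PM (B S))"
  proof (rule P.finite_measure_finite_Union)
    show "finite SS" unfolding SS_def
      by (rule finite_subset[of _ "Pow I"]) (auto simp: finI)
    show "B ` SS \<subseteq> sets PM" unfolding B_def PM_def
      by (auto intro!: sets_PiM_I_finite finI simp: Aset Aset')
    show "disjoint_family_on B SS" unfolding disjoint_family_on_def B_def SS_def
      by (auto simp: PiE_iff) (metis ComplD subsetD)+
  qed
  also have "\<dots> = (\<Sum>S\<in>SS. \<Prod>j\<in>I. if j \<in> S then 1 - F v else F v)"
  proof (rule sum.cong[OF refl])
    fix S assume "S \<in> SS"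
    have "emeasure PM (B S) = (\<Prod>j\<in>I. emeasure M (if j \<in> S then A j else - A j))"
      unfolding PM_def B_def by (rule PS.emeasure_PiM[OF finI]) (auto simp: Aset Aset')
    also have "\<dots> = (\<Prod>j\<in>I. ennreal (if j \<in> S then 1 - F v else F v))"
      by (rule prod.cong[OF refl])
        (auto simp: M.emeasure_eq_measure[unfolded M_def] M_def A_def measure_M_A[OF assms(2,3)])
    also have "\<dots> = ennreal (\<Prod>j\<in>I. if j \<in> S then 1 - F v else F v)"
      by (rule prod_ennreal) (use F_nonneg[OF assms(2,3)] F01 in auto)
    finally show "measure PM (B S) = (\<Prod>j\<in>I. if j \<in> S then 1 - F v else F v)"
      using F_nonneg[OF assms(2,3)] F01 by (simp add: measure_def prod_nonneg)
  qed
  finally show ?thesis unfolding SS_def I_def .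
qed

end



lemma prod_if_pow:
  fixes a b :: real
  assumes "finite I" "S \<subseteq> I"
  shows "(\<Prod>j\<in>I. if j \<in> S then a else b) = a ^ card S * b ^ card (I - S)"
proof -
  have "(\<Prod>j\<in>I. if j \<in> S then a else b) = (\<Prod>j\<in>I \<inter> {j. j \<in> S}. a) * (\<Prod>j\<in>I \<inter> - {j. j \<in> S}. b)"
    by (rule prod.If_cases[OF assms(1)])
  moreover have "I \<inter> {j. j \<in> S} = S" "I \<inter> - {j. j \<in> S} = I - S" using assms(2) by auto
  ultimately show ?thesis by simp
qed

definition PP :: "nat set set \<Rightarrow> nat set \<Rightarrow> real \<Rightarrow> real" where
  "PP SS I q = (\<Sum>S\<in>SS. (1 - q) ^ card S * q ^ card (I - S))"

definition dPP :: "nat set set \<Rightarrow> nat set \<Rightarrow> real \<Rightarrow> real" where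
  "dPP SS I q = (\<Sum>S\<in>SS. - (real (card S) * (1 - q) ^ (card S - 1)) * q ^ card (I - S)
      + (1 - q) ^ card S * (real (card (I - S)) * q ^ (card (I - S) - 1)))"

lemma PP_deriv: "(PP SS I has_real_derivative dPP SS I q) (at q)"
  unfolding PP_def[abs_def] dPP_def
  by (auto intro!: derivative_eq_intros sum.cong simp: mult_ac)

lemma PP_cont: "continuous_on A (PP SS I)"
  unfolding PP_def[abs_def] by (intro continuous_intros)

lemma dPP_cont: "continuous_on A (dPP SS I)"
  unfolding dPP_def[abs_def] by (intro continuous_intros)

lemma term_bound:
  fixes q :: real
  assumes "0 \<le> q" "q \<le> 1" "Suc m \<le> b"
  shows "\<bar>- (real a * (1 - q) ^ (a - 1)) * q ^ b + (1 - q) ^ a * (real b * q ^ (b - 1))\<bar>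
          \<le> real (a + b) * q ^ m"
proof -
  have p1: "(1 - q) ^ (a - 1) \<le> 1" "(1 - q) ^ a \<le> 1" using assms by (auto intro: power_le_one)
  have p0: "0 \<le> (1 - q) ^ (a - 1)" "0 \<le> (1 - q) ^ a" using assms by auto
  have q1: "q ^ b \<le> q ^ m" by (rule power_decreasing) (use assms in auto)
  have q2: "q ^ (b - 1) \<le> q ^ m" by (rule power_decreasing) (use assms in auto)
  have "\<bar>- (real a * (1 - q) ^ (a - 1)) * q ^ b + (1 - q) ^ a * (real b * q ^ (b - 1))\<bar>
      \<le> real a * ((1 - q) ^ (a - 1) * q ^ b) + real b * ((1 - q) ^ a * q ^ (b - 1))"
  proof -
    have "\<bar>- (real a * (1 - q) ^ (a - 1)) * q ^ b + (1 - q) ^ a * (real b * q ^ (b - 1))\<bar>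
       \<le> \<bar>- (real a * (1 - q) ^ (a - 1)) * q ^ b\<bar> + \<bar>(1 - q) ^ a * (real b * q ^ (b - 1))\<bar>"
      by (rule abs_triangle_ineq)
    also have "\<bar>- (real a * (1 - q) ^ (a - 1)) * q ^ b\<bar> = real a * ((1 - q) ^ (a - 1) * q ^ b)"
      using p0 assms by (simp add: abs_mult)
    also have "\<bar>(1 - q) ^ a * (real b * q ^ (b - 1))\<bar> = real b * ((1 - q) ^ a * q ^ (b - 1))"
      using p0 assms by (simp add: abs_mult)
    finally show ?thesis .
  qed
  also have "\<dots> \<le> real a * q ^ m + real b * q ^ m"
  proof (intro add_mono mult_left_mono)
    show "(1 - q) ^ (a - 1) * q ^ b \<le> q ^ m"
      using mult_mono[OF p1(1) q1] p0 assms by simp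
    show "(1 - q) ^ a * q ^ (b - 1) \<le> q ^ m"
      using mult_mono[OF p1(2) q2] p0 assms by simp
  qed auto
  finally show ?thesis by (simp add: algebra_simps)
qed

lemma dPP_bound:
  assumes "finite SS" "\<And>S. S \<in> SS \<Longrightarrow> card S + card (I - S) \<le> N \<and> Suc m \<le> card (I - S)"
    and "0 \<le> q" "q \<le> 1"
  shows "\<bar>dPP SS I q\<bar> \<le> real (card SS) * real N * q ^ m"
proof -
  have "\<bar>dPP SS I q\<bar> \<le> (\<Sum>S\<in>SS. \<bar>- (real (card S) * (1 - q) ^ (card S - 1)) * q ^ card (I - S)
      + (1 - q) ^ card S * (real (card (I - S)) * q ^ (card (I - S) - 1))\<bar>)"
    unfolding dPP_def by (rule sum_abs)
  also have "\<dots> \<le> (\<Sum>S\<in>SS. real N * q ^ m)"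
  proof (rule sum_mono)
    fix S assume S: "S \<in> SS"
    have "real (card S + card (I - S)) * q ^ m \<le> real N * q ^ m"
      using assms(2)[OF S] assms(3) by (intro mult_right_mono) auto
    then show "\<bar>- (real (card S) * (1 - q) ^ (card S - 1)) * q ^ card (I - S)
      + (1 - q) ^ card S * (real (card (I - S)) * q ^ (card (I - S) - 1))\<bar> \<le> real N * q ^ m"
      using term_bound[OF assms(3,4), of m "card (I - S)" "card S"] assms(2)[OF S] by linarith
  qed
  also have "\<dots> = real (card SS) * real N * q ^ m" by simp
  finally show ?thesis .
qed




theorem mainTheorem14:
  fixes n k i :: nat and vbar :: real and F f :: "real \<Rightarrow> real"
  assumes "2 \<le> k" and "k < n" and "i < n"
    and "vbar > 0"
    and "continuous_on {0..vbar} f"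
    and "\<forall>u\<in>{0..vbar}. f u > 0"
    and "\<forall>u\<in>{0..vbar}. F u = integral {0..u} f"
    and "F vbar = 1"
  shows
   "let z = interim_pay n k vbar f i;
        Rbar = real n * (LINT v | value_dist vbar f. z v);
        G = (\<lambda>u. real ((n - 1) choose (k - 1)) * (1 - F u) ^ (k - 2) * F u ^ (n - k) * f u);
        N = (\<lambda>v. integral {0..v} (\<lambda>u. (deriv z u - Rbar * G u) * (1 - F u)));
        D = (\<lambda>v. real ((n - 1) choose (k - 1)) * F v ^ (n - k) * (1 - F v) ^ k);
        \<psi> = (\<lambda>v. N v / D v)
    in (\<psi> \<longlongrightarrow> 0) (at_right 0)"
proof -
  note A = assms(4-8)
  define I where "I = {0..<n} - {i}"
  define SS where "SS = {S. S \<subseteq> I \<and> card S < k}"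
  define P where "P = PP SS I"
  define dP where "dP = dPP SS I"
  define z where "z = interim_pay n k vbar f i"
  define R where "R = real n * (LINT v | value_dist vbar f. z v)"
  define C where "C = real ((n - 1) choose (k - 1))"
  define G where "G = (\<lambda>u. C * (1 - F u) ^ (k - 2) * F u ^ (n - k) * f u)"
  define N where "N = (\<lambda>v. integral {0..v} (\<lambda>u. (deriv z u - R * G u) * (1 - F u)))"
  define D where "D = (\<lambda>v. C * F v ^ (n - k) * (1 - F v) ^ k)"
  define m where "m = n - k - 1"
  have nkm: "n - k = Suc m" unfolding m_def using assms(2) by simp
  have finI: "finite I" unfolding I_def by simp
  have cardI: "card I = n - 1" unfolding I_def using assms(3) by simp
  have finSS: "finite SS" unfolding SS_def
    by (rule finite_subset[of _ "Pow I"]) (auto simp: finI)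
  have Cpos: "C > 0" unfolding C_def using assms(1,2) by simp
  have Fnn: "0 \<le> F u" "F u \<le> 1" if "u \<in> {0..vbar}" for u
    using F_nonneg[OF A, of u] F_le1[OF A, of u] that by auto
  have fpos: "f u > 0" if "u \<in> {0..vbar}" for u using assms(6) that by auto
  have xform: "interim_alloc n k vbar f i u = P (F u)" if "u \<in> {0..vbar}" for u
  proof -
    have "interim_alloc n k vbar f i u = (\<Sum>S\<in>SS. \<Prod>j\<in>I. if j \<in> S then 1 - F u else F u)"
      using interim_alloc_formula[OF A assms(3), of u] that unfolding SS_def I_def by auto
    also have "\<dots> = P (F u)" unfolding P_def PP_def
      by (rule sum.cong[OF refl]) (auto simp: SS_def intro!: prod_if_pow finI)
    finally show ?thesis .
  qed
  have fint: "f integrable_on {0..vbar}" by (rule integrable_continuous_real[OF assms(5)])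
  have Fcont: "continuous_on {0..vbar} F"
    by (rule continuous_on_eq[OF indefinite_integral_continuous_1[OF fint]]) (use assms(7) in auto)
  have FD: "(F has_real_derivative f w) (at w)" if "w \<in> {0<..<vbar}" for w
  proof -
    have "((\<lambda>x. integral {0..x} f) has_real_derivative f w) (at w within {0..vbar})"
      by (rule integral_has_real_derivative[OF assms(5)]) (use that in auto)
    then have "((\<lambda>x. integral {0..x} f) has_real_derivative f w) (at w)"
      using that by (simp add: at_within_Icc_at)
    then show ?thesis
      by (rule has_field_derivative_transform_within_open[of _ _ _ "{0<..<vbar}"]) (use that assms(7) in auto)
  qed
  obtain a1 where a1: "a1 \<in> {0..vbar}" "\<forall>y\<in>{0..vbar}. f y \<le> f a1"
    using continuous_attains_sup[OF compact_Icc _ assms(5)] assms(4) by auto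
  obtain a0 where a0: "a0 \<in> {0..vbar}" "\<forall>y\<in>{0..vbar}. f a0 \<le> f y"
    using continuous_attains_inf[OF compact_Icc _ assms(5)] assms(4) by auto
  define fmax where "fmax = f a1"
  define fmin where "fmin = f a0"
  have fmin_pos: "fmin > 0" unfolding fmin_def using fpos a0 by auto
  have fmax_pos: "fmax > 0" unfolding fmax_def using fpos a1 by auto
  have fle: "fmin \<le> f u" "f u \<le> fmax" if "u \<in> {0..vbar}" for u
    using a0 a1 that unfolding fmin_def fmax_def by auto
  have Fup: "F u \<le> fmax * u" and Flo: "fmin * u \<le> F u" if "u \<in> {0..vbar}" for u
  proof -
    have fi: "f integrable_on {0..u}"
      by (rule integrable_continuous_real, rule continuous_on_subset[OF assms(5)]) (use that in auto)
    have "F u = integral {0..u} f" using assms(7) that by auto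
    also have "\<dots> \<le> integral {0..u} (\<lambda>_. fmax)"
      by (rule integral_le[OF fi]) (use fle that in auto)
    also have "\<dots> = fmax * u" using that by simp
    finally show "F u \<le> fmax * u" .
    have "fmin * u = integral {0..u} (\<lambda>_. fmin)" using that by simp
    also have "\<dots> \<le> integral {0..u} f"
      by (rule integral_le[OF _ fi]) (use fle that in auto)
    also have "\<dots> = F u" using assms(7) that by auto
    finally show "fmin * u \<le> F u" .
  qed
  have PFcont: "continuous_on {0..vbar} (\<lambda>u. P (F u))"
    unfolding P_def by (rule continuous_on_compose2[OF PP_cont Fcont]) auto
  define Z where "Z = (\<lambda>y. y * P (F y) - integral {0..y} (\<lambda>u. P (F u)))"
  have zZ: "z y = Z y" if "y \<in> {0<..<vbar}" for y
  proof -
    have "integral {0..y} (interim_alloc n k vbar f i) = integral {0..y} (\<lambda>u. P (F u))"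
      by (rule integral_cong) (use xform that in auto)
    moreover have "interim_alloc n k vbar f i y = P (F y)" using xform[of y] that by simp
    ultimately show ?thesis unfolding z_def Z_def interim_pay_def by simp
  qed
  have zD: "deriv z w = w * dP (F w) * f w" if w: "w \<in> {0<..<vbar}" for w
  proof -
    have d1: "((\<lambda>y. P (F y)) has_real_derivative dP (F w) * f w) (at w)"
      unfolding P_def dP_def by (rule DERIV_chain2[OF PP_deriv FD[OF w]])
    have d2: "((\<lambda>y. integral {0..y} (\<lambda>u. P (F u))) has_real_derivative P (F w)) (at w)"
    proof -
      have "((\<lambda>y. integral {0..y} (\<lambda>u. P (F u))) has_real_derivative P (F w)) (at w within {0..vbar})"
        by (rule integral_has_real_derivative[OF PFcont]) (use w in auto)
      then show ?thesis using w by (simp add: at_within_Icc_at)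
    qed
    have "(Z has_real_derivative w * dP (F w) * f w) (at w)"
      unfolding Z_def using DERIV_diff[OF DERIV_mult[OF DERIV_ident d1] d2] by (simp add: algebra_simps)
    then have "(z has_real_derivative w * dP (F w) * f w) (at w)"
    proof (rule has_field_derivative_transform_within_open[of Z _ w "{0<..<vbar}"])
      show "open {0<..<vbar}" by simp
      show "w \<in> {0<..<vbar}" by (rule w)
      fix x assume "x \<in> {0<..<vbar}" then show "Z x = z x" using zZ[of x] by simp
    qed
    then show ?thesis by (rule DERIV_imp_deriv)
  qed
  define g where "g = (\<lambda>u. (u * dP (F u) * f u - R * G u) * (1 - F u))"
  have dPFcont: "continuous_on {0..vbar} (\<lambda>u. dP (F u))"
    unfolding dP_def by (rule continuous_on_compose2[OF dPP_cont Fcont]) auto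
  have gcont: "continuous_on {0..vbar} g"
    unfolding g_def G_def
    by (intro continuous_on_mult continuous_on_diff continuous_on_power continuous_on_const continuous_on_id dPFcont Fcont assms(5))
  define cSS where "cSS = real (card SS)"
  define K where "K = cSS * real (n - 1) * fmax ^ (n - k) + \<bar>R\<bar> * C * fmax ^ (n - k) * fmax"
  have K0: "K \<ge> 0" unfolding K_def cSS_def using fmax_pos Cpos by auto
  have gbound: "\<bar>g u\<bar> \<le> K * u ^ (n - k)" if u: "u \<in> {0..vbar}" for u
  proof -
    have q0: "0 \<le> F u" and q1: "F u \<le> 1" using Fnn[OF u] by auto
    have u0: "0 \<le> u" using u by auto
    have fu: "0 < f u" "f u \<le> fmax" using fpos[OF u] fle[OF u] by auto
    have h1: "\<bar>dP (F u)\<bar> \<le> cSS * real (n - 1) * F u ^ m"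
      unfolding dP_def cSS_def
    proof (rule dPP_bound[OF finSS _ q0 q1])
      fix S assume S: "S \<in> SS"
      then have SI: "S \<subseteq> I" "card S < k" unfolding SS_def by auto
      have cs: "card (I - S) = card I - card S"
        using SI finI by (simp add: card_Diff_subset finite_subset)
      have "card S \<le> card I" using SI finI by (simp add: card_mono)
      then show "card S + card (I - S) \<le> n - 1 \<and> Suc m \<le> card (I - S)"
        using cs cardI SI nkm by auto
    qed
    have h2: "F u ^ m \<le> (fmax * u) ^ m" by (rule power_mono[OF Fup[OF u] q0])
    have h3: "F u ^ (n - k) \<le> (fmax * u) ^ (n - k)" by (rule power_mono[OF Fup[OF u] q0])
    have A1: "\<bar>u * dP (F u) * f u\<bar> \<le> cSS * real (n - 1) * fmax ^ (n - k) * u ^ (n - k)"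
    proof -
      have "\<bar>u * dP (F u) * f u\<bar> = u * \<bar>dP (F u)\<bar> * f u" using u0 fu by (simp add: abs_mult)
      also have "\<dots> \<le> u * (cSS * real (n - 1) * (fmax * u) ^ m) * fmax"
      proof (intro mult_mono mult_left_mono)
        show "\<bar>dP (F u)\<bar> \<le> cSS * real (n - 1) * (fmax * u) ^ m"
          using h1 h2 by (smt (verit, best) cSS_def mult_left_mono of_nat_0_le_iff zero_le_mult_iff)
      qed (use u0 fu cSS_def in auto)
      also have "\<dots> = cSS * real (n - 1) * fmax ^ (n - k) * u ^ (n - k)"
        unfolding nkm by (simp add: power_mult_distrib algebra_simps)
      finally show ?thesis .
    qed
    have A2: "\<bar>R * G u\<bar> \<le> \<bar>R\<bar> * C * fmax ^ (n - k) * fmax * u ^ (n - k)"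
    proof -
      have p: "(1 - F u) ^ (k - 2) \<le> 1" "0 \<le> (1 - F u) ^ (k - 2)" using q0 q1 by (auto intro: power_le_one)
      have "\<bar>G u\<bar> = C * (1 - F u) ^ (k - 2) * F u ^ (n - k) * f u"
        unfolding G_def using Cpos q0 q1 fu by (simp add: abs_mult)
      also have "\<dots> \<le> C * 1 * (fmax * u) ^ (n - k) * fmax"
        by (intro mult_mono mult_left_mono p h3) (use Cpos q0 fu u0 fmax_pos in auto)
      finally have "\<bar>G u\<bar> \<le> C * fmax ^ (n - k) * fmax * u ^ (n - k)"
        by (simp add: power_mult_distrib algebra_simps)
      then show ?thesis by (simp add: abs_mult mult_left_mono mult.assoc)
    qed
    have A3: "\<bar>1 - F u\<bar> \<le> 1" using q0 q1 by auto
    have "\<bar>g u\<bar> = \<bar>u * dP (F u) * f u - R * G u\<bar> * \<bar>1 - F u\<bar>" unfolding g_def by (simp add: abs_mult)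
    also have "\<dots> \<le> (\<bar>u * dP (F u) * f u\<bar> + \<bar>R * G u\<bar>) * 1"
      by (intro mult_mono A3) (auto intro: abs_triangle_ineq4)
    also have "\<dots> \<le> K * u ^ (n - k)" using A1 A2 unfolding K_def by (simp add: algebra_simps)
    finally show ?thesis .
  qed
  have Nbound: "\<bar>N v\<bar> \<le> K * v ^ (n - k) * v" if v: "0 < v" "v < vbar" for v
  proof -
    have "N v = integral {0..v} g"
      unfolding N_def
    proof (rule integral_spike[of "{0}"])
      fix x assume x: "x \<in> {0..v} - {0}"
      then have "x \<in> {0<..<vbar}" using v by auto
      then show "g x = (deriv z x - R * G x) * (1 - F x)" unfolding g_def using zD[of x] by simp
    qed simp
    moreover have gi: "(g has_integral integral {0..v} g) (cbox 0 v)"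
      unfolding box_real(2)
      by (rule integrable_integral, rule integrable_continuous_real, rule continuous_on_subset[OF gcont]) (use v in auto)
    have "norm (integral {0..v} g) \<le> K * v ^ (n - k) * Henstock_Kurzweil_Integration.content (cbox 0 v)"
    proof (rule has_integral_bound[OF _ gi])
      show "0 \<le> K * v ^ (n - k)" using K0 v by simp
      fix x assume "x \<in> cbox 0 v"
      then have x: "x \<in> {0..vbar}" "x \<le> v" "0 \<le> x" using v by (auto simp: box_real)
      have "\<bar>g x\<bar> \<le> K * x ^ (n - k)" by (rule gbound[OF x(1)])
      also have "\<dots> \<le> K * v ^ (n - k)" by (intro mult_left_mono power_mono) (use x K0 in auto)
      finally show "norm (g x) \<le> K * v ^ (n - k)" by simp
    qed
    ultimately show ?thesis using v by (simp add: box_real(2) content_real)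
  qed
  define L where "L = C * fmin ^ (n - k) * (1 / 2) ^ k"
  have Lpos: "L > 0" unfolding L_def using Cpos fmin_pos by simp
  have Dlow: "L * v ^ (n - k) \<le> D v" if v: "0 < v" "v < vbar" "fmax * v \<le> 1 / 2" for v
  proof -
    have vv: "v \<in> {0..vbar}" using v by auto
    have p1: "(fmin * v) ^ (n - k) \<le> F v ^ (n - k)"
      by (rule power_mono[OF Flo[OF vv]]) (use fmin_pos v in simp)
    have p2: "(1 / 2) ^ k \<le> (1 - F v) ^ k"
      by (rule power_mono) (use Fup[OF vv] v in auto)
    have "L * v ^ (n - k) = C * (fmin * v) ^ (n - k) * (1 / 2) ^ k"
      unfolding L_def by (simp add: power_mult_distrib)
    also have "\<dots> \<le> C * F v ^ (n - k) * (1 - F v) ^ k"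
      by (intro mult_mono mult_left_mono p1 p2) (use Cpos Fnn[OF vv] in auto)
    finally show ?thesis unfolding D_def .
  qed
  have ev: "eventually (\<lambda>v. norm (N v / D v) \<le> K / L * v) (at_right 0)"
    unfolding eventually_at_right_field
  proof (intro exI[of _ "min vbar (1 / (2 * fmax))"] conjI allI impI)
    show "0 < min vbar (1 / (2 * fmax))" using assms(4) fmax_pos by simp
    fix y :: real assume y0: "0 < y" and yb: "y < min vbar (1 / (2 * fmax))"
    then have y: "0 < y" "y < vbar" "fmax * y \<le> 1 / 2" using fmax_pos
      by (auto simp: field_simps)
    have Lp: "0 < L * y ^ (n - k)" using Lpos y by simp
    have Dp: "0 < D y" using Dlow[OF y] Lp by linarith
    have "norm (N y / D y) = \<bar>N y\<bar> / D y" using Dp by simp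
    also have "\<dots> \<le> (K * y ^ (n - k) * y) / (L * y ^ (n - k))"
      by (rule frac_le) (use Nbound[OF y(1,2)] K0 y Lp Dlow[OF y] in auto)
    also have "\<dots> = K / L * y" using Lp by (simp add: field_simps)
    finally show "norm (N y / D y) \<le> K / L * y" .
  qed
  have lim: "((\<lambda>v. K / L * v) \<longlongrightarrow> 0) (at_right 0)"
    by (auto intro!: tendsto_eq_intros simp: less_imp_neq[OF Lpos, symmetric])
  have goal: "((\<lambda>v. N v / D v) \<longlongrightarrow> 0) (at_right 0)"
    by (rule Lim_null_comparison[OF ev lim])
  show ?thesis using goal unfolding Let_def N_def D_def G_def R_def z_def C_def .
qed


end
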